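(* Let $\mathcal{G}$ be a finite-dimensional nilpotent Lie algebra and $S$ a finite abelian semigroup. Then the $S$-expanded algebra $\mathcal{G}_S=S\otimes\mathcal{G}$ is nilpotent; any resonant subalgebra $\mathcal{G}_{S,R}$ is nilpotent; and, if $S$ has a zero element $0_S$, the $0_S$-reduced algebra $\mathcal{G}_S^{\mathrm{red}}$ is nilpotent.
   Context: For a Lie algebra $\mathcal{G}$ with basis $\{X_i\}$, $[X_i,X_j]=C_{ij}^kX_k$, and a finite abelian semigroup $S=\{\lambda_\alpha\}$ with 2-selector $K_{\alpha\beta}^\gamma$ ($=1$ if $\lambda_\alpha\lambda_\beta=\lambda_\gamma$, else $0$), $\mathcal{G}_S$ has basis $X_{(i,\alpha)}=\lambda_\alpha\otimes X_i$ and bracket $[X_{(i,\alpha)},X_{(j,\beta)}]=K_{\alpha\beta}^\gamma C_{ij}^kX_{(k,\gamma)}$. A resonant subalgebra: given $\mathcal{G}=\bigoplus_{p\in I}V_p$ with $[V_p,V_q]\subset\bigoplus_{r\in i(p,q)}V_r$ and $S=\bigcup_{p\in I}S_p$ with $S_p\cdot S_q\subset\bigcap_{r\in i(p,q)}S_r$, $\mathcal{G}_{S,R}=\bigoplus_p S_p\otimes V_p$. For a zero element $0_S$ ($0_S\lambda=0_S$ for all $\lambda$), $\mathcal{G}_S^{\mathrm{red}}$ is spanned by $X_{(i,\alpha)}$ with $\lambda_\alpha\ne0_S$ with the same structure constants restricted to $\lambda_\gamma\neq 0_S$. A Lie algebra $\mathcal{L}$ is nilpotent if the lower central series $\mathcal{L}_{(0)}=\mathcal{L}$,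 $\mathcal{L}_{(n)}=[\mathcal{L}_{(n-1)},\mathcal{L}]$ reaches $0$. *)

theory Defs
  imports Main
begin

text \<open>A Lie algebra over a field 'k is presented, as in the paper, by a finite
basis indexed by a set I and structure constants C i j k, with
[X_i, X_j] = sum_k C i j k X_k.\<close>

definition vecs :: "'b set \<Rightarrow> ('b \<Rightarrow> 'k::field) set" where
  "vecs I = {x. \<forall>b. b \<notin> I \<longrightarrow> x b = 0}"

definition lin_span :: "('b \<Rightarrow> 'k::field) set \<Rightarrow> ('b \<Rightarrow> 'k) set" where
  "lin_span A = {x. \<exists>F c. finite F \<and> F \<subseteq> A \<and> x = (\<lambda>b. \<Sum>v\<in>F. c v * v b)}"

definition br :: "'b set \<Rightarrow> ('b \<Rightarrow> 'b \<Rightarrow> 'b \<Rightarrow> 'k::field) \<Rightarrow> ('b \<Rightarrow> 'k) \<Rightarrow> ('b \<Rightarrow> 'k) \<Rightarrow> ('b \<Rightarrow> 'k)" where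
  "br I C x y = (\<lambda>k. if k \<in> I then (\<Sum>i\<in>I. \<Sum>j\<in>I. x i * y j * C i j k) else 0)"

definition is_lie_sc :: "'b set \<Rightarrow> ('b \<Rightarrow> 'b \<Rightarrow> 'b \<Rightarrow> 'k::field) \<Rightarrow> bool" where
  "is_lie_sc I C \<longleftrightarrow> finite I \<and>
     (\<forall>i\<in>I. \<forall>k\<in>I. C i i k = 0) \<and>
     (\<forall>i\<in>I. \<forall>j\<in>I. \<forall>k\<in>I. C i j k = - C j i k) \<and>
     (\<forall>i\<in>I. \<forall>j\<in>I. \<forall>m\<in>I. \<forall>l\<in>I.
        (\<Sum>k\<in>I. C i j k * C k m l + C j m k * C k i l + C m i k * C k j l) = 0)"

fun lcs :: "'b set \<Rightarrow> ('b \<Rightarrow> 'b \<Rightarrow> 'b \<Rightarrow> 'k::field) \<Rightarrow> ('b \<Rightarrow> 'k) set \<Rightarrow> nat \<Rightarrow> ('b \<Rightarrow> 'k) set" where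
  "lcs I C W 0 = W"
| "lcs I C W (Suc n) = lin_span {br I C x y | x y. x \<in> lcs I C W n \<and> y \<in> W}"

definition nilpotent_sub :: "'b set \<Rightarrow> ('b \<Rightarrow> 'b \<Rightarrow> 'b \<Rightarrow> 'k::field) \<Rightarrow> ('b \<Rightarrow> 'k) set \<Rightarrow> bool" where
  "nilpotent_sub I C W \<longleftrightarrow> (\<exists>n. lcs I C W n = {\<lambda>_. 0})"

definition nilpotent_LA :: "'b set \<Rightarrow> ('b \<Rightarrow> 'b \<Rightarrow> 'b \<Rightarrow> 'k::field) \<Rightarrow> bool" where
  "nilpotent_LA I C \<longleftrightarrow> nilpotent_sub I C (vecs I)"

definition fin_ab_semigroup :: "'s set \<Rightarrow> ('s \<Rightarrow> 's \<Rightarrow> 's) \<Rightarrow> bool" where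
  "fin_ab_semigroup S mult \<longleftrightarrow> finite S \<and> S \<noteq> {} \<and>
     (\<forall>a\<in>S. \<forall>b\<in>S. mult a b \<in> S) \<and>
     (\<forall>a\<in>S. \<forall>b\<in>S. \<forall>c\<in>S. mult (mult a b) c = mult a (mult b c)) \<and>
     (\<forall>a\<in>S. \<forall>b\<in>S. mult a b = mult b a)"

definition exp_sc :: "('s \<Rightarrow> 's \<Rightarrow> 's) \<Rightarrow> ('b \<Rightarrow> 'b \<Rightarrow> 'b \<Rightarrow> 'k::field)
     \<Rightarrow> ('b \<times> 's) \<Rightarrow> ('b \<times> 's) \<Rightarrow> ('b \<times> 's) \<Rightarrow> 'k" where
  "exp_sc mult C = (\<lambda>(i,a) (j,b) (k,c). if mult a b = c then C i j k else 0)"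

definition tens :: "'s \<Rightarrow> ('b \<Rightarrow> 'k::field) \<Rightarrow> ('b \<times> 's \<Rightarrow> 'k)" where
  "tens a v = (\<lambda>(i,b). if b = a then v i else 0)"

definition subspace_decomp :: "'b set \<Rightarrow> ('b \<Rightarrow> 'b \<Rightarrow> 'b \<Rightarrow> 'k::field) \<Rightarrow> 'p set
     \<Rightarrow> ('p \<Rightarrow> ('b \<Rightarrow> 'k) set) \<Rightarrow> ('p \<Rightarrow> 'p \<Rightarrow> 'p set) \<Rightarrow> bool" where
  "subspace_decomp I C P V ip \<longleftrightarrow> finite P \<and>
     (\<forall>p\<in>P. V p \<subseteq> vecs I \<and> lin_span (V p) = V p) \<and>
     (\<forall>x\<in>vecs I. \<exists>!v. (\<forall>p. p \<notin> P \<longrightarrow> v p = (\<lambda>_. 0)) \<and> (\<forall>p\<in>P. v p \<in> V p)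
                    \<and> x = (\<lambda>b. \<Sum>p\<in>P. v p b)) \<and>
     (\<forall>p\<in>P. \<forall>q\<in>P. ip p q \<subseteq> P \<and>
        (\<forall>x\<in>V p. \<forall>y\<in>V q. br I C x y \<in> lin_span (\<Union>r\<in>ip p q. V r)))"

definition resonant_decomp :: "'s set \<Rightarrow> ('s \<Rightarrow> 's \<Rightarrow> 's) \<Rightarrow> 'p set
     \<Rightarrow> ('p \<Rightarrow> 'p \<Rightarrow> 'p set) \<Rightarrow> ('p \<Rightarrow> 's set) \<Rightarrow> bool" where
  "resonant_decomp S mult P ip Sp \<longleftrightarrow>
     (\<forall>p\<in>P. Sp p \<subseteq> S) \<and> S = (\<Union>p\<in>P. Sp p) \<and>
     (\<forall>p\<in>P. \<forall>q\<in>P. \<forall>a\<in>Sp p. \<forall>b\<in>Sp q. \<forall>r\<in>ip p q. mult a b \<in> Sp r)"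

definition resonant_sub :: "'p set \<Rightarrow> ('p \<Rightarrow> ('b \<Rightarrow> 'k::field) set) \<Rightarrow> ('p \<Rightarrow> 's set)
     \<Rightarrow> ('b \<times> 's \<Rightarrow> 'k) set" where
  "resonant_sub P V Sp = lin_span (\<Union>p\<in>P. {tens a v | a v. a \<in> Sp p \<and> v \<in> V p})"

end

theory Submission imports Defs begin

lemma comp_eq:
  fixes x y :: "'b \<times> 's \<Rightarrow> 'k::field"
  assumes "k \<in> I" "c \<in> T"
  shows "br (I \<times> T) (exp_sc mult C) x y (k,c) =
    (\<Sum>a\<in>T. \<Sum>b\<in>T. if mult a b = c then br I C (\<lambda>i. x (i,a)) (\<lambda>j. y (j,b)) k else 0)"
proof -
  have "br (I \<times> T) (exp_sc mult C) x y (k,c) =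
     (\<Sum>i\<in>I. \<Sum>a\<in>T. \<Sum>j\<in>I. \<Sum>b\<in>T. x (i,a) * y (j,b) * (if mult a b = c then C i j k else 0))"
    using assms by (simp add: br_def exp_sc_def sum.cartesian_product')
  also have "\<dots> = (\<Sum>a\<in>T. \<Sum>i\<in>I. \<Sum>b\<in>T. \<Sum>j\<in>I. x (i,a) * y (j,b) * (if mult a b = c then C i j k else 0))"
    by (subst sum.swap, rule sum.cong, simp, rule sum.cong, simp, rule sum.swap)
  also have "\<dots> = (\<Sum>a\<in>T. \<Sum>b\<in>T. \<Sum>i\<in>I. \<Sum>j\<in>I. x (i,a) * y (j,b) * (if mult a b = c then C i j k else 0))"
    by (rule sum.cong, simp, rule sum.swap)
  also have "\<dots> = (\<Sum>a\<in>T. \<Sum>b\<in>T. if mult a b = c then br I C (\<lambda>i. x (i,a)) (\<lambda>j. y (j,b)) k else 0)"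
    using assms by (intro sum.cong refl) (simp add: br_def)
  finally show ?thesis .
qed

lemma lin_span_zero: "(\<lambda>_. 0) \<in> lin_span A"
  unfolding lin_span_def by (rule CollectI, rule exI[of _ "{}"]) auto

lemma lin_span_base: "a \<in> A \<Longrightarrow> a \<in> lin_span A"
  unfolding lin_span_def by (rule CollectI, rule exI[of _ "{a}"], rule exI[of _ "\<lambda>_. 1"]) auto

lemma lin_span_comb:
  assumes "u \<in> lin_span A" "v \<in> lin_span A"
  shows "(\<lambda>b. k * u b + v b) \<in> lin_span A"
proof -
  from assms obtain F1 c1 F2 c2 where h: "finite F1" "F1 \<subseteq> A" "u = (\<lambda>b. \<Sum>w\<in>F1. c1 w * w b)"
     "finite F2" "F2 \<subseteq> A" "v = (\<lambda>b. \<Sum>w\<in>F2. c2 w * w b)"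
    unfolding lin_span_def by blast
  define c where "c w = (if w \<in> F1 then k * c1 w else 0) + (if w \<in> F2 then c2 w else 0)" for w
  have "(\<lambda>b. k * u b + v b) = (\<lambda>b. \<Sum>w\<in>F1 \<union> F2. c w * w b)"
  proof
    fix b
    have e1: "(\<Sum>w\<in>F1 \<union> F2. (if w \<in> F1 then k * c1 w * w b else 0)) = (\<Sum>w\<in>F1. k * c1 w * w b)"
      using sum.inter_restrict[of "F1 \<union> F2" "\<lambda>w. k * c1 w * w b" F1] h by (simp add: Int_absorb1)
    have e2: "(\<Sum>w\<in>F1 \<union> F2. (if w \<in> F2 then c2 w * w b else 0)) = (\<Sum>w\<in>F2. c2 w * w b)"
      using sum.inter_restrict[of "F1 \<union> F2" "\<lambda>w. c2 w * w b" F2] h by (simp add: Int_absorb1)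
    have "(\<Sum>w\<in>F1 \<union> F2. c w * w b) = (\<Sum>w\<in>F1 \<union> F2. (if w \<in> F1 then k * c1 w * w b else 0) + (if w \<in> F2 then c2 w * w b else 0))"
      by (rule sum.cong) (auto simp: c_def algebra_simps)
    also have "\<dots> = k * u b + v b" using e1 e2 h by (simp add: sum.distrib sum_distrib_left mult.assoc)
    finally show "k * u b + v b = (\<Sum>w\<in>F1 \<union> F2. c w * w b)" by simp
  qed
  moreover have "finite (F1 \<union> F2)" "F1 \<union> F2 \<subseteq> A" using h by auto
  ultimately show ?thesis unfolding lin_span_def
    by (intro CollectI exI[of _ "F1 \<union> F2"] exI[of _ c] conjI) auto
qed

lemma lin_span_sum:
  assumes "finite A" "\<And>a. a \<in> A \<Longrightarrow> f a \<in> lin_span X"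
  shows "(\<lambda>b. \<Sum>a\<in>A. f a b) \<in> lin_span X"
  using assms
proof (induction A rule: finite_induct)
  case empty then show ?case by (simp add: lin_span_zero)
next
  case (insert a A)
  have "(\<lambda>b. 1 * f a b + (\<Sum>a\<in>A. f a b)) \<in> lin_span X"
    using insert.IH insert.prems by (intro lin_span_comb) auto
  then show ?case using insert by simp
qed

lemma lin_span_ind:
  assumes "\<And>a. a \<in> A \<Longrightarrow> P a" "P (\<lambda>_. 0)"
    "\<And>k u v. P u \<Longrightarrow> P v \<Longrightarrow> P (\<lambda>b. k * u b + v b)"
    "x \<in> lin_span A"
  shows "P x"
proof -
  from assms(4) obtain F c where h: "finite F" "F \<subseteq> A" "x = (\<lambda>b. \<Sum>w\<in>F. c w * w b)"
    unfolding lin_span_def by blast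
  have "P (\<lambda>b. \<Sum>w\<in>F. c w * w b)" using h(1,2)
  proof (induction F rule: finite_induct)
    case empty then show ?case using assms(2) by simp
  next
    case (insert a F)
    then show ?case using assms(1)[of a] assms(3)[where k="c a" and u=a and v="\<lambda>b. \<Sum>w\<in>F. c w * w b"] by simp
  qed
  then show ?thesis using h by simp
qed

definition rs :: "'b set \<Rightarrow> ('b \<Rightarrow> 'k::field) \<Rightarrow> ('b \<Rightarrow> 'k)" where
  "rs I u = (\<lambda>i. if i \<in> I then u i else 0)"

lemma br_rs: "br I C u v = br I C (rs I u) (rs I v)"
  unfolding br_def rs_def by (intro ext) (auto intro!: sum.cong)

lemma br_in_vecs: "br I C u v \<in> vecs I"
  unfolding br_def vecs_def by auto

lemma rs_vecs: "u \<in> vecs I \<Longrightarrow> rs I u = u"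
  unfolding rs_def vecs_def by auto

lemma main_inv:
  fixes C :: "'b \<Rightarrow> 'b \<Rightarrow> 'b \<Rightarrow> 'k::field" and T :: "'s set"
  assumes "finite T"
  shows "x \<in> lcs (I \<times> T) (exp_sc mult C) W n \<Longrightarrow> rs I (\<lambda>i. x (i,c)) \<in> lcs I C (vecs I) n"
proof (induction n arbitrary: x c)
  case 0
  then show ?case by (simp add: rs_def vecs_def)
next
  case (Suc n)
  let ?G = "lin_span {br I C x y |x y. x \<in> lcs I C (vecs I) n \<and> y \<in> vecs I}"
  have "\<forall>c. rs I (\<lambda>i. x (i,c)) \<in> ?G"
  proof (rule lin_span_ind[where P = "\<lambda>x. \<forall>c. rs I (\<lambda>i. x (i,c)) \<in> ?G"])
    show "x \<in> lin_span {br (I \<times> T) (exp_sc mult C) x y |x y. x \<in> lcs (I \<times> T) (exp_sc mult C) W n \<and> y \<in> W}"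
      using Suc.prems by simp
  next
    show "\<forall>c. rs I (\<lambda>i. 0) \<in> ?G" by (simp add: rs_def lin_span_zero)
  next
    fix k and u v :: "'b \<times> 's \<Rightarrow> 'k"
    assume hu: "\<forall>c. rs I (\<lambda>i. u (i,c)) \<in> ?G" and hv: "\<forall>c. rs I (\<lambda>i. v (i,c)) \<in> ?G"
    show "\<forall>c. rs I (\<lambda>i. k * u (i,c) + v (i,c)) \<in> ?G"
    proof
      fix c
      have "rs I (\<lambda>i. k * u (i,c) + v (i,c)) = (\<lambda>b. k * rs I (\<lambda>i. u (i,c)) b + rs I (\<lambda>i. v (i,c)) b)"
        by (auto simp: rs_def)
      then show "rs I (\<lambda>i. k * u (i,c) + v (i,c)) \<in> ?G"
        using lin_span_comb[OF hu[rule_format, of c] hv[rule_format, of c], of k] by simp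
    qed
  next
    fix z assume "z \<in> {br (I \<times> T) (exp_sc mult C) x y |x y. x \<in> lcs (I \<times> T) (exp_sc mult C) W n \<and> y \<in> W}"
    then obtain x y where z: "z = br (I \<times> T) (exp_sc mult C) x y" and x: "x \<in> lcs (I \<times> T) (exp_sc mult C) W n"
      by blast
    show "\<forall>c. rs I (\<lambda>i. z (i,c)) \<in> ?G"
    proof
      fix c
      show "rs I (\<lambda>i. z (i,c)) \<in> ?G"
      proof (cases "c \<in> T")
        case False
        then have "rs I (\<lambda>i. z (i,c)) = (\<lambda>_. 0)" by (auto simp: z br_def rs_def)
        then show ?thesis by (simp add: lin_span_zero)
      next
        case True
        have eq: "rs I (\<lambda>i. z (i,c)) = (\<lambda>k. \<Sum>a\<in>T. \<Sum>b\<in>T. if mult a b = c then br I C (\<lambda>i. x (i,a)) (\<lambda>j. y (j,b)) k else 0)"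
        proof
          fix k show "rs I (\<lambda>i. z (i,c)) k = (\<Sum>a\<in>T. \<Sum>b\<in>T. if mult a b = c then br I C (\<lambda>i. x (i,a)) (\<lambda>j. y (j,b)) k else 0)"
          proof (cases "k \<in> I")
            case True with \<open>c \<in> T\<close> show ?thesis by (simp add: rs_def z comp_eq)
          next
            case False
            have "(\<Sum>a\<in>T. \<Sum>b\<in>T. if mult a b = c then br I C (\<lambda>i. x (i,a)) (\<lambda>j. y (j,b)) k else 0) = 0"
              using False by (intro sum.neutral ballI) (simp add: br_def)
            then show ?thesis using False by (simp add: rs_def)
          qed
        qed
        have mem: "(if mult a b = c then br I C (\<lambda>i. x (i,a)) (\<lambda>j. y (j,b)) else (\<lambda>_. 0)) \<in> ?G" for a b
        proof (cases "mult a b = c")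
          case True
          have "br I C (\<lambda>i. x (i,a)) (\<lambda>j. y (j,b)) = br I C (rs I (\<lambda>i. x (i,a))) (rs I (\<lambda>j. y (j,b)))"
            by (rule br_rs)
          moreover have "rs I (\<lambda>i. x (i,a)) \<in> lcs I C (vecs I) n" using Suc.IH x by blast
          moreover have "rs I (\<lambda>j. y (j,b)) \<in> vecs I" by (simp add: rs_def vecs_def)
          ultimately have "br I C (\<lambda>i. x (i,a)) (\<lambda>j. y (j,b)) \<in> {br I C x y |x y. x \<in> lcs I C (vecs I) n \<and> y \<in> vecs I}"
            by blast
          then show ?thesis using True by (simp add: lin_span_base)
        qed (simp add: lin_span_zero)
        have "(\<lambda>k. \<Sum>a\<in>T. \<Sum>b\<in>T. (if mult a b = c then br I C (\<lambda>i. x (i,a)) (\<lambda>j. y (j,b)) else (\<lambda>_. 0)) k) \<in> ?G"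
        proof (rule lin_span_sum[OF assms])
          fix a assume "a \<in> T"
          show "(\<lambda>k. \<Sum>b\<in>T. (if mult a b = c then br I C (\<lambda>i. x (i,a)) (\<lambda>j. y (j,b)) else (\<lambda>_. 0)) k) \<in> ?G"
            by (rule lin_span_sum[OF assms mem])
        qed
        moreover have "(\<lambda>k. \<Sum>a\<in>T. \<Sum>b\<in>T. (if mult a b = c then br I C (\<lambda>i. x (i,a)) (\<lambda>j. y (j,b)) else (\<lambda>_. 0)) k)
           = (\<lambda>k. \<Sum>a\<in>T. \<Sum>b\<in>T. if mult a b = c then br I C (\<lambda>i. x (i,a)) (\<lambda>j. y (j,b)) k else 0)"
          by (intro ext sum.cong refl) simp
        ultimately show ?thesis using eq by simp
      qed
    qed
  qed
  then show ?case by simp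
qed

lemma lin_span_vecs: "A \<subseteq> vecs I \<Longrightarrow> x \<in> lin_span A \<Longrightarrow> x \<in> vecs I"
  by (rule lin_span_ind[where P="\<lambda>x. x \<in> vecs I"]) (auto simp: vecs_def)

lemma lin_span_zero_only: "A \<subseteq> {\<lambda>_. 0} \<Longrightarrow> lin_span A = {\<lambda>_. 0}"
proof
  assume A: "A \<subseteq> {\<lambda>_. 0}"
  show "lin_span A \<subseteq> {\<lambda>_. 0}"
  proof
    fix x assume "x \<in> lin_span A"
    then have "x = (\<lambda>_. 0)"
      by (rule lin_span_ind[where P="\<lambda>x. x = (\<lambda>_. 0)", rotated 3]) (use A in auto)
    then show "x \<in> {\<lambda>_. 0}" by simp
  qed
qed (simp add: lin_span_zero)

lemma nil_general:
  fixes C :: "'b \<Rightarrow> 'b \<Rightarrow> 'b \<Rightarrow> 'k::field" and T :: "'s set"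
  assumes "finite T" "nilpotent_LA I C"
  shows "nilpotent_sub (I \<times> T) (exp_sc mult C) W"
proof -
  obtain N where N: "lcs I C (vecs I) N = {\<lambda>_. 0}"
    using assms(2) unfolding nilpotent_LA_def nilpotent_sub_def by blast
  have G0: "lcs I C (vecs I) (Suc N) = {\<lambda>_. 0}"
    unfolding lcs.simps N by (rule lin_span_zero_only) (auto simp: br_def)
  have "lcs (I \<times> T) (exp_sc mult C) W (Suc N) \<subseteq> {\<lambda>_. 0}"
  proof
    fix x assume x: "x \<in> lcs (I \<times> T) (exp_sc mult C) W (Suc N)"
    have v: "x \<in> vecs (I \<times> T)"
      using x by (simp only: lcs.simps) (rule lin_span_vecs[rotated], auto simp: br_in_vecs)
    have r: "rs I (\<lambda>i. x (i,c)) = (\<lambda>_. 0)" for c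
      using main_inv[OF assms(1) x, of c] G0 by simp
    have "x = (\<lambda>_. 0)"
    proof
      fix p show "x p = 0"
      proof (cases p)
        case (Pair i c)
        show ?thesis
        proof (cases "i \<in> I")
          case True then show ?thesis using fun_cong[OF r[of c], of i] Pair by (simp add: rs_def)
        next
          case False then show ?thesis using v Pair by (simp add: vecs_def)
        qed
      qed
    qed
    then show "x \<in> {\<lambda>_. 0}" by simp
  qed
  moreover have "(\<lambda>_. 0) \<in> lcs (I \<times> T) (exp_sc mult C) W (Suc N)"
    by (simp add: lin_span_zero)
  ultimately show ?thesis unfolding nilpotent_sub_def by blast
qed

theorem mainTheorem4:
  fixes I :: "'b set" and C :: "'b \<Rightarrow> 'b \<Rightarrow> 'b \<Rightarrow> 'k::field"
    and S :: "'s set" and mult :: "'s \<Rightarrow> 's \<Rightarrow> 's"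
  assumes "is_lie_sc I C" and "nilpotent_LA I C"
    and "fin_ab_semigroup S mult"
  shows "nilpotent_LA (I \<times> S) (exp_sc mult C)
    \<and> (\<forall>(P :: 'p set) V ip Sp. subspace_decomp I C P V ip \<and> resonant_decomp S mult P ip Sp
          \<longrightarrow> nilpotent_sub (I \<times> S) (exp_sc mult C) (resonant_sub P V Sp))
    \<and> (\<forall>z\<in>S. (\<forall>a\<in>S. mult z a = z) \<longrightarrow> nilpotent_LA (I \<times> (S - {z})) (exp_sc mult C))"
proof -
  have fS: "finite S" using assms(3) by (simp add: fin_ab_semigroup_def)
  show ?thesis
    using nil_general[OF fS assms(2)] nil_general[OF finite_Diff[OF fS] assms(2)]
    unfolding nilpotent_LA_def by blast
qed

end
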